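(* Let $X$ be a strictly convex curve in $\mathbb{R}^2$ satisfying Condition (C): for every point $P$ on $X$ and every chord $AB$ of $X$ parallel to the tangent line of $X$ at $P$, the area of the region bounded by $X$ and $AB$ equals $\frac43$ times the area of triangle $\triangle ABP$. Fix a point $A\in X$ and choose coordinates $(x,y)$ with $A=(0,0)$ and the $x$-axis tangent to $X$ at $A$, so that near $A$ the curve $X$ is the graph of a nonnegative strictly convex $C^3$ function $f$ defined on a neighborhood of $0$ with $f(0)=f'(0)=0$ and $f''(0)>0$. For $x\neq 0$ near $0$ let $g(x)$ be the number with $|g(x)|<|x|$ (lying between $0$ and $x$) such that $x f'(g(x))=f(x)$, i.e. the tangent of $X$ at $(g(x),f(g(x)))$ is parallel to the chord from $(0,0)$ to $(x,f(x))$; set $g(0)=0$. Then for all $x$ near $0$, $$x^3 f''(g(x))=8\{f(x)g(x)-xf(g(x))\},$$ $$x f(x)=\frac43\{f(x)g(x)-xf(g(x))\}+2\int_0^x f(t)\,dt.$$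
   Context: A curve in $\mathbb{R}^2$ is convex if it bounds a convex domain; a convex curve $X$ is strictly convex if it is connected, of class $C^{3}$, and has positive curvature with respect to the unit normal pointing to the convex side. The "region bounded by $X$ and the chord $AB$" is the region enclosed by the arc of $X$ between $A$ and $B$ and the segment $AB$. *)

theory Defs
  imports "HOL-Analysis.Analysis"
begin

definition cross2 :: "real \<times> real \<Rightarrow> real \<times> real \<Rightarrow> real" where
  "cross2 u v = fst u * snd v - snd u * fst v"

definition local_param ::
  "(real \<times> real) set \<Rightarrow> (real \<Rightarrow> real \<times> real) \<Rightarrow> (real \<Rightarrow> real \<times> real) \<Rightarrow>
   (real \<Rightarrow> real \<times> real) \<Rightarrow> (real \<Rightarrow> real \<times> real) \<Rightarrow> real \<Rightarrow> real \<Rightarrow> bool" where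
  "local_param X g g1 g2 g3 a b \<longleftrightarrow>
     a < b \<and> inj_on g {a<..<b} \<and> g ` {a<..<b} \<subseteq> X \<and>
     openin (top_of_set X) (g ` {a<..<b}) \<and>
     (\<forall>t\<in>{a<..<b}. (g has_vector_derivative g1 t) (at t) \<and>
                     (g1 has_vector_derivative g2 t) (at t) \<and>
                     (g2 has_vector_derivative g3 t) (at t) \<and> g1 t \<noteq> 0) \<and>
     continuous_on {a<..<b} g3"

definition inward_normal :: "(real \<times> real) set \<Rightarrow> real \<times> real \<Rightarrow> real \<times> real \<Rightarrow> real \<times> real \<Rightarrow> bool" where
  "inward_normal D p tau n \<longleftrightarrow> norm n = 1 \<and> n \<bullet> tau = 0 \<and>
     (\<exists>e>0. \<forall>s. 0 < s \<and> s < e \<longrightarrow> p + s *\<^sub>R n \<in> D)"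

definition curvature_wrt :: "real \<times> real \<Rightarrow> real \<times> real \<Rightarrow> real \<times> real \<Rightarrow> real" where
  "curvature_wrt v w n = (w \<bullet> n) / (norm v)\<^sup>2"

definition strictly_convex_curve :: "(real \<times> real) set \<Rightarrow> (real \<times> real) set \<Rightarrow> bool" where
  "strictly_convex_curve X D \<longleftrightarrow>
     open D \<and> convex D \<and> D \<noteq> {} \<and> X = frontier D \<and> X \<noteq> {} \<and> connected X \<and>
     (\<forall>P\<in>X. \<exists>g g1 g2 g3 a b t. local_param X g g1 g2 g3 a b \<and> t \<in> {a<..<b} \<and> g t = P) \<and>
     (\<forall>g g1 g2 g3 a b. local_param X g g1 g2 g3 a b \<longrightarrow>
        (\<forall>t\<in>{a<..<b}. \<forall>n. inward_normal D (g t) (g1 t) n \<longrightarrow>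
           curvature_wrt (g1 t) (g2 t) n > 0))"

definition tangent_direction :: "(real \<times> real) set \<Rightarrow> real \<times> real \<Rightarrow> real \<times> real \<Rightarrow> bool" where
  "tangent_direction X P v \<longleftrightarrow> v \<noteq> 0 \<and>
     (\<exists>g g1 g2 g3 a b t. local_param X g g1 g2 g3 a b \<and> t \<in> {a<..<b} \<and> g t = P \<and>
        cross2 v (g1 t) = 0)"

text \<open>Region bounded by X and the chord AB, on the side of P (the arc through P):
  the part of the convex domain D strictly on P's side of line AB.\<close>
definition cap_region :: "(real \<times> real) set \<Rightarrow> real \<times> real \<Rightarrow> real \<times> real \<Rightarrow> real \<times> real \<Rightarrow> (real \<times> real) set" where
  "cap_region D A B P = {z \<in> D. cross2 (B - A) (z - A) * cross2 (B - A) (P - A) > 0}"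

definition triangle_area :: "real \<times> real \<Rightarrow> real \<times> real \<Rightarrow> real \<times> real \<Rightarrow> real" where
  "triangle_area A B P = \<bar>cross2 (B - A) (P - A)\<bar> / 2"

definition condition_C :: "(real \<times> real) set \<Rightarrow> (real \<times> real) set \<Rightarrow> bool" where
  "condition_C X D \<longleftrightarrow>
     (\<forall>P A B v. P \<in> X \<and> A \<in> X \<and> B \<in> X \<and> A \<noteq> B \<and> tangent_direction X P v \<and>
        cross2 (B - A) v = 0 \<longrightarrow>
        measure lebesgue (cap_region D A B P) = 4/3 * triangle_area A B P)"

definition strictly_convex_fun_on :: "real set \<Rightarrow> (real \<Rightarrow> real) \<Rightarrow> bool" where
  "strictly_convex_fun_on I f \<longleftrightarrow>
     (\<forall>x\<in>I. \<forall>y\<in>I. x \<noteq> y \<longrightarrow> (\<forall>t. 0 < t \<and> t < 1 \<longrightarrow>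
        f ((1 - t) * x + t * y) < (1 - t) * f x + t * f y))"

end

theory Submission
  imports Defs
begin


lemma measure_between:
  fixes lo hi :: "real \<Rightarrow> real"
  assumes ab: "a \<le> b" and clo: "continuous_on UNIV lo" and chi: "continuous_on UNIV hi"
    and le: "\<And>\<tau>. \<tau> \<in> {a..b} \<Longrightarrow> lo \<tau> \<le> hi \<tau>"
    and I: "((\<lambda>\<tau>. hi \<tau> - lo \<tau>) has_integral I) {a..b}"
  shows "measure lebesgue {p. a < fst p \<and> fst p < b \<and> lo (fst p) < snd p \<and> snd p < hi (fst p)} = I"
proof -
  define R where "R = {p::real\<times>real. a < fst p \<and> fst p < b \<and> lo (fst p) < snd p \<and> snd p < hi (fst p)}"
  have "open R" unfolding R_def
    by (intro open_Collect_conj open_Collect_less continuous_intros continuous_on_compose2[OF clo] continuous_on_compose2[OF chi]) auto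
  then have Rs: "R \<in> sets lborel" by simp
  have I0: "I \<ge> 0"
    using has_integral_nonneg[OF I] le by auto
  have "emeasure lborel R = emeasure (lborel \<Otimes>\<^sub>M lborel) R"
    by (simp add: lborel_prod)
  also have "\<dots> = (\<integral>\<^sup>+x. emeasure lborel (Pair x -` R) \<partial>lborel)"
    by (rule lborel.emeasure_pair_measure_alt) (subst lborel_prod, rule Rs)
  also have "\<dots> = (\<integral>\<^sup>+x. ennreal (hi x - lo x) * indicator {a<..<b} x \<partial>lborel)"
  proof (rule nn_integral_cong)
    fix x :: real
    show "emeasure lborel (Pair x -` R) = ennreal (hi x - lo x) * indicator {a<..<b} x"
    proof (cases "a < x \<and> x < b")
      case True
      then have "Pair x -` R = {lo x<..<hi x}" by (auto simp: R_def)
      then show ?thesis using True le[of x] by (simp add: indicator_def)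
    next
      case False
      then have "Pair x -` R = {}" by (auto simp: R_def)
      then show ?thesis using False by (simp add: indicator_def)
    qed
  qed
  also have "\<dots> = ennreal I"
    by (rule nn_integral_has_integral_lebesgue') (use le I in \<open>auto simp: has_integral_Icc_iff_Ioo[symmetric]\<close>)
  finally have "emeasure lborel R = ennreal I" .
  then have "measure lborel R = I" using I0 by (simp add: measure_def)
  then show ?thesis using Rs by (simp add: R_def)
qed



lemma alg1: fixes A a t ft fc f1a f1c c :: real
 shows "(1 - A)*((ft - f1c*(t-a)) + ft)/2 + (t - a)*(f1a * A + (f1c + A*(f1a - f1c)))/2 - (ft - (ft - f1c*(t-a)) * A) - 2/3*((1 - A)*((ft - f1c*(t-a)) + f1c*(c-a) - fc) + (t-a)*(f1a * A - f1c * A)) = -(1/3)*(2*(ft - fc - f1c*(t-c))*(1-A) - (t-a)*((f1c + A*(f1a - f1c)) - f1c))"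
  by (simp add: field_simps)

lemma r1: fixes a b u w :: real assumes "b * w^2 = a * u^2" "b > 0" "u > 0"
  shows "a / b = (w/u)^2"
  using assms by (simp add: power_divide frac_eq_eq) (simp add: algebra_simps)
lemma r2: fixes K a u w :: real assumes "K = (u + w)^2 / (a / 2 * u^2)" "a > 0" "u > 0"
  shows "K * a / 2 = (1 + w/u)^2"
proof -
  have "(1 + w/u) = (u+w)/u" using assms by (simp add: field_simps)
  then have "(1 + w/u)^2 = (u+w)^2/u^2" by (simp add: power_divide)
  moreover have "K * a / 2 = (u+w)^2/u^2" using assms by (simp add: field_simps)
  ultimately show ?thesis by simp
qed

lemma chord_family:
  fixes f f1 f2 F :: "real \<Rightarrow> real" and a0 b0 c m :: real
  assumes ac: "a0 < c" and cb: "c < b0"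
    and dF: "\<And>t. a0 \<le> t \<Longrightarrow> t \<le> b0 \<Longrightarrow> (F has_real_derivative f t) (at t)"
    and df: "\<And>t. a0 \<le> t \<Longrightarrow> t \<le> b0 \<Longrightarrow> (f has_real_derivative f1 t) (at t)"
    and df1: "\<And>t. a0 \<le> t \<Longrightarrow> t \<le> b0 \<Longrightarrow> (f1 has_real_derivative f2 t) (at t)"
    and m: "m > 0" and f2b: "\<And>t. a0 \<le> t \<Longrightarrow> t \<le> b0 \<Longrightarrow> m \<le> f2 t \<and> f2 t \<le> 4*m"
    and cf2: "isCont f2 c"
    and sl: "f1 c * (b0 - a0) = f b0 - f a0"
    and key: "\<And>a b. a0 \<le> a \<Longrightarrow> a < c \<Longrightarrow> c < b \<Longrightarrow> b \<le> b0 \<Longrightarrow> f1 c * (b - a) = f b - f a \<Longrightarrow>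
        (b-a)*(f a + f b)/2 - (F b - F a) = 2/3*((b-a)*(f a + f1 c*(c - a) - f c))"
  shows "(b0-a0)^2 * f2 c = 8*(f a0 + f1 c*(c-a0) - f c)"
proof -
  define \<phi> where "\<phi> t = f t - f c - f1 c*(t-c)" for t
  have d\<phi>: "(\<phi> has_real_derivative f1 t - f1 c) (at t)" if "a0 \<le> t" "t \<le> b0" for t
    unfolding \<phi>_def using df[OF that] by (auto intro!: derivative_eq_intros)
  have cont\<phi>: "continuous_on {a0..b0} \<phi>"
    using d\<phi> by (meson DERIV_isCont atLeastAtMost_iff continuous_at_imp_continuous_on)
  have f1mono: "f1 s < f1 t" if "a0 \<le> s" "s < t" "t \<le> b0" for s t
  proof (rule DERIV_pos_imp_increasing[OF \<open>s < t\<close>])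
    fix x assume "s \<le> x" "x \<le> t"
    then have "a0 \<le> x" "x \<le> b0" using that by auto
    then show "\<exists>y. DERIV f1 x :> y \<and> y > 0"
      using df1 f2b m by (intro exI[of _ "f2 x"]) force
  qed
  have \<phi>inc: "\<phi> s < \<phi> t" if "c \<le> s" "s < t" "t \<le> b0" for s t
  proof (rule DERIV_pos_imp_increasing_open[OF \<open>s < t\<close>])
    fix x assume "s < x" "x < t"
    then show "\<exists>y. DERIV \<phi> x :> y \<and> 0 < y"
      using that ac d\<phi>[of x] f1mono[of c x] by (intro exI[of _ "f1 x - f1 c"]) auto
  next
    show "continuous_on {s..t} \<phi>" by (rule continuous_on_subset[OF cont\<phi>]) (use that ac in auto)
  qed
  have \<phi>dec: "\<phi> s > \<phi> t" if "a0 \<le> s" "s < t" "t \<le> c" for s t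
  proof (rule DERIV_neg_imp_decreasing_open[OF \<open>s < t\<close>])
    fix x assume "s < x" "x < t"
    then show "\<exists>y. DERIV \<phi> x :> y \<and> y < 0"
      using that cb d\<phi>[of x] f1mono[of x c] by (intro exI[of _ "f1 x - f1 c"]) auto
  next
    show "continuous_on {s..t} \<phi>" by (rule continuous_on_subset[OF cont\<phi>]) (use that cb in auto)
  qed
  have \<phi>c: "\<phi> c = 0" by (simp add: \<phi>_def)
  have \<phi>ab: "\<phi> b0 = \<phi> a0" using sl by (simp add: \<phi>_def algebra_simps)
  have taylor: "\<exists>\<xi>. (if x < c then x < \<xi> \<and> \<xi> < c else c < \<xi> \<and> \<xi> < x) \<and> \<phi> x = f2 \<xi> / 2 * (x - c)^2"
    if "a0 \<le> x" "x \<le> b0" "x \<noteq> c" for x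
  proof -
    define diff where "diff k = (if k = 0 then f else if k = 1 then f1 else f2)" for k :: nat
    have "\<exists>t. (if x < c then x < t \<and> t < c else c < t \<and> t < x) \<and>
      f x = (\<Sum>m<2. (diff m c / fact m) * (x - c)^m) + (diff 2 t / fact 2) * (x - c)^2"
      by (rule Taylor[of 2 diff f a0 b0 c x]) (use that ac cb df df1 in \<open>auto simp: diff_def less_2_cases_iff\<close>)
    then obtain t where "(if x < c then x < t \<and> t < c else c < t \<and> t < x)"
      "f x = (\<Sum>m<2. (diff m c / fact m) * (x - c)^m) + (diff 2 t / fact 2) * (x - c)^2" by blast
    then show ?thesis by (intro exI[of _ t]) (auto simp: diff_def \<phi>_def numeral_2_eq_2 lessThan_Suc)
  qed
  have inj: "inj_on \<phi> {a0..c}"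
  proof (rule inj_onI)
    fix x y assume "x \<in> {a0..c}" "y \<in> {a0..c}" "\<phi> x = \<phi> y"
    then show "x = y" using \<phi>dec[of x y] \<phi>dec[of y x] by (cases x y rule: linorder_cases) auto
  qed
  have img: "\<phi> ` {a0..c} = {0..\<phi> a0}"
  proof
    show "\<phi> ` {a0..c} \<subseteq> {0..\<phi> a0}"
    proof
      fix y assume "y \<in> \<phi> ` {a0..c}"
      then obtain x where x: "x \<in> {a0..c}" "y = \<phi> x" by auto
      then show "y \<in> {0..\<phi> a0}"
        using \<phi>dec[of x c] \<phi>dec[of a0 x] \<phi>c by (cases "x = c"; cases "x = a0") auto
    qed
  next
    show "{0..\<phi> a0} \<subseteq> \<phi> ` {a0..c}"
    proof
      fix y assume y: "y \<in> {0..\<phi> a0}"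
      have "\<exists>x. a0 \<le> x \<and> x \<le> c \<and> \<phi> x = y"
        by (rule IVT2') (use y \<phi>c ac cb in \<open>auto intro: continuous_on_subset[OF cont\<phi>]\<close>)
      then show "y \<in> \<phi> ` {a0..c}" by auto
    qed
  qed
  define \<psi> where "\<psi> = the_inv_into {a0..c} \<phi>"
  have \<psi>1: "\<psi> y \<in> {a0..c}" "\<phi> (\<psi> y) = y" if "y \<in> {0..\<phi> a0}" for y
    using the_inv_into_into[OF inj, of y "{a0..c}"] f_the_inv_into_f[OF inj, of y] that img
    unfolding \<psi>_def by auto
  have \<psi>2: "\<psi> (\<phi> x) = x" if "x \<in> {a0..c}" for x
    unfolding \<psi>_def using the_inv_into_f_f[OF inj that] .
  have cont\<psi>: "continuous_on {0..\<phi> a0} \<psi>"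
    using continuous_on_inv[of "{a0..c}" \<phi> \<psi>] \<psi>2 img cont\<phi> cb
    by (metis atLeastAtMost_iff compact_Icc continuous_on_subset less_imp_le order_refl subsetI atLeastatMost_subset_iff)
  have \<phi>pos: "\<phi> t > 0" if "c < t" "t \<le> b0" for t using \<phi>inc[of c t] that \<phi>c by auto
  have \<phi>rng: "\<phi> t \<in> {0..\<phi> a0}" if "c \<le> t" "t \<le> b0" for t
    using \<phi>inc[of c t] \<phi>inc[of t b0] that \<phi>c \<phi>ab by (cases "t = c"; cases "t = b0") auto
  define \<alpha> where "\<alpha> t = \<psi> (\<phi> t)" for t
  have \<alpha>1: "\<alpha> t \<in> {a0..c}" "\<phi> (\<alpha> t) = \<phi> t" if "c \<le> t" "t \<le> b0" for t
    using \<psi>1[OF \<phi>rng[OF that]] unfolding \<alpha>_def by auto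
  have \<alpha>lt: "\<alpha> t < c" if "c < t" "t \<le> b0" for t
    using \<alpha>1[of t] \<phi>pos[of t] that \<phi>c by (cases "\<alpha> t = c") auto
  have \<alpha>b0: "\<alpha> b0 = a0" unfolding \<alpha>_def using \<psi>2[of a0] \<phi>ab ac by auto
  have cont\<alpha>: "continuous_on {c..b0} \<alpha>"
    unfolding \<alpha>_def
    by (rule continuous_on_compose2[OF cont\<psi> continuous_on_subset[OF cont\<phi>]]) (use \<phi>rng ac in auto)
  have d\<alpha>: "(\<alpha> has_real_derivative inverse (f1 (\<alpha> t) - f1 c) * (f1 t - f1 c)) (at t)"
    if "c < t" "t < b0" for t
  proof -
    let ?y = "\<phi> t"
    have y: "0 < ?y" "?y < \<phi> a0" using \<phi>pos[of t] \<phi>inc[of t b0] \<phi>ab that by auto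
    have "\<psi> ?y \<noteq> a0" using \<psi>1[of ?y] y by (metis atLeastAtMost_iff less_irrefl less_imp_le)
    moreover have "\<psi> ?y \<noteq> c" using \<psi>1[of ?y] y \<phi>c by (metis atLeastAtMost_iff less_irrefl less_imp_le)
    ultimately have py: "a0 < \<psi> ?y" "\<psi> ?y < c" using \<psi>1[of ?y] y by auto
    have "(\<psi> has_real_derivative inverse (f1 (\<psi> ?y) - f1 c)) (at ?y)"
    proof (rule DERIV_inverse_function[where a=0 and b="\<phi> a0"])
      show "DERIV \<phi> (\<psi> ?y) :> f1 (\<psi> ?y) - f1 c" using d\<phi> py cb by auto
      show "f1 (\<psi> ?y) - f1 c \<noteq> 0" using f1mono[of "\<psi> ?y" c] py cb by auto
      show "0 < ?y" "?y < \<phi> a0" by (rule y)+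
      show "\<phi> (\<psi> z) = z" if "0 < z" "z < \<phi> a0" for z using \<psi>1[of z] that by auto
      show "isCont \<psi> ?y"
        using continuous_on_interior[OF cont\<psi>, of ?y] y by auto
    qed
    moreover have "DERIV \<phi> t :> f1 t - f1 c" using d\<phi> that ac by auto
    ultimately show ?thesis unfolding \<alpha>_def using DERIV_chain2 by fastforce
  qed
  define G where "G t = (t - \<alpha> t)^2 / \<phi> t" for t
  have Gd: "(G has_real_derivative 0) (at t)" if t: "c < t" "t < b0" for t
  proof -
    define A where "A = inverse (f1 (\<alpha> t) - f1 c) * (f1 t - f1 c)"
    define a where "a = \<alpha> t"
    have a: "a0 \<le> a" "a < c" using \<alpha>1[of t] \<alpha>lt[of t] t unfolding a_def by auto
    have \<phi>a: "\<phi> a = \<phi> t" using \<alpha>1[of t] t unfolding a_def by auto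
    have slope: "f a = f t - f1 c * (t - a)" using \<phi>a by (simp add: \<phi>_def algebra_simps)
    have f1a: "f1 a - f1 c \<noteq> 0" using f1mono[of a c] a cb by auto
    have A: "f1 t = f1 c + A * (f1 a - f1 c)" using f1a by (simp add: A_def a_def[symmetric] field_simps)
    define H where "H s = (s - \<alpha> s)*(f (\<alpha> s) + f s)/2 - (F s - F (\<alpha> s))
       - 2/3*((s - \<alpha> s)*(f (\<alpha> s) + f1 c*(c - \<alpha> s) - f c))" for s
    define EH where "EH = (1 - A)*(f a + f t)/2 + (t - a)*(f1 a * A + f1 t)/2 - (f t - f a * A)
       - 2/3*((1 - A)*(f a + f1 c*(c-a) - f c) + (t-a)*(f1 a * A - f1 c * A))"
    have dal: "(\<alpha> has_real_derivative A) (at t)" using d\<alpha>[OF t] by (simp add: A_def)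
    have dfa: "(f has_real_derivative f1 a) (at (\<alpha> t))" using df a unfolding a_def using ac cb by auto
    have dFa: "(F has_real_derivative f a) (at (\<alpha> t))" using dF a unfolding a_def using ac cb by auto
    have d1: "((\<lambda>s. f (\<alpha> s)) has_real_derivative f1 a * A) (at t)" by (rule DERIV_chain2[OF dfa dal])
    have d2: "((\<lambda>s. F (\<alpha> s)) has_real_derivative f a * A) (at t)" by (rule DERIV_chain2[OF dFa dal])
    have d3: "(f has_real_derivative f1 t) (at t)" using df t ac by auto
    have d4: "(F has_real_derivative f t) (at t)" using dF t ac by auto
    have "(H has_real_derivative EH) (at t)"
      unfolding H_def EH_def
      by (auto intro!: derivative_eq_intros d1 d2 d3 d4 dal simp: a_def field_simps)
    moreover have "(H has_real_derivative 0) (at t)"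
    proof (rule has_field_derivative_transform_within_open[of "\<lambda>_. 0" 0 t "{c<..<b0}"])
      show "((\<lambda>_. 0) has_real_derivative 0) (at t)" by simp
      show "open {c<..<b0}" by simp
      show "t \<in> {c<..<b0}" using t by simp
      fix s assume s: "s \<in> {c<..<b0}"
      then have "\<alpha> s \<in> {a0..c}" "\<phi> (\<alpha> s) = \<phi> s" "\<alpha> s < c" using \<alpha>1[of s] \<alpha>lt[of s] by auto
      moreover have "f1 c * (s - \<alpha> s) = f s - f (\<alpha> s)" using calculation(2) by (simp add: \<phi>_def algebra_simps)
      ultimately have "(s - \<alpha> s)*(f (\<alpha> s) + f s)/2 - (F s - F (\<alpha> s)) =
          2/3*((s - \<alpha> s)*(f (\<alpha> s) + f1 c*(c - \<alpha> s) - f c))"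
        using s by (intro key) auto
      then show "0 = H s" by (simp add: H_def)
    qed
    ultimately have EH0: "EH = 0" by (rule DERIV_unique)
    have "EH = -(1/3)*(2*\<phi> t*(1-A) - (t-a)*(f1 t - f1 c))"
      unfolding EH_def \<phi>_def slope A by (rule alg1)
    with EH0 have key2: "2*\<phi> t*(1-A) = (t-a)*(f1 t - f1 c)" by simp
    have \<phi>t: "\<phi> t > 0" using \<phi>pos[of t] t by auto
    have d5: "(\<phi> has_real_derivative f1 t - f1 c) (at t)" using d\<phi> t ac by auto
    have "(G has_real_derivative (2*(t-a)*(1-A)*\<phi> t - (t-a)^2*(f1 t - f1 c)) / (\<phi> t)^2) (at t)"
    proof -
      have dL: "((\<lambda>s. s - \<alpha> s) has_real_derivative 1 - A) (at t)"
        using dal by (auto intro!: derivative_eq_intros)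
      have dL2: "((\<lambda>s. (s - \<alpha> s)^2) has_real_derivative 2*(t-a)*(1-A)) (at t)"
        using DERIV_power[OF dL, of 2] by (simp add: a_def mult.commute mult.left_commute)
      have "(G has_real_derivative ((2*(t-a)*(1-A)) * \<phi> t - (t - \<alpha> t)^2 * (f1 t - f1 c)) / (\<phi> t * \<phi> t)) (at t)"
        unfolding G_def by (rule DERIV_divide[OF dL2 d5]) (use \<phi>t in auto)
      then show ?thesis by (simp add: a_def power2_eq_square)
    qed
    moreover have "2*(t-a)*(1-A)*\<phi> t - (t-a)^2*(f1 t - f1 c) = 0"
    proof -
      have e1: "2*(t-a)*(1-A)*\<phi> t = (t-a)*(2*\<phi> t*(1-A))" by (simp add: algebra_simps)
      have e2: "(t-a)^2*(f1 t - f1 c) = (t-a)*((t-a)*(f1 t - f1 c))" by (simp add: power2_eq_square)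
      show ?thesis by (simp only: e1 e2 key2 diff_self)
    qed
    ultimately show ?thesis by simp
  qed
  define K where "K = (b0 - a0)^2 / \<phi> a0"
  have \<phi>a0: "\<phi> a0 > 0" using \<phi>pos[of b0] cb \<phi>ab by auto
  have Gb0: "G b0 = K" unfolding G_def K_def using \<alpha>b0 \<phi>ab by simp
  have Gconst: "G t = K" if t: "c < t" "t < b0" for t
  proof -
    have "G b0 = G t"
    proof (rule DERIV_isconst_end[OF t(2)])
      show "continuous_on {t..b0} G" unfolding G_def
      proof (intro continuous_on_divide continuous_on_power continuous_on_diff continuous_on_id)
        show "continuous_on {t..b0} \<alpha>" by (rule continuous_on_subset[OF cont\<alpha>]) (use t in auto)
        show "continuous_on {t..b0} \<phi>" by (rule continuous_on_subset[OF cont\<phi>]) (use t ac in auto)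
        show "\<forall>x\<in>{t..b0}. \<phi> x \<noteq> 0" using \<phi>pos t by (metis atLeastAtMost_iff less_le_trans order_less_irrefl)
      qed
      show "DERIV G x :> 0" if "t < x" "x < b0" for x using Gd[of x] that t by auto
    qed
    then show ?thesis using Gb0 by simp
  qed
  have pt: "\<exists>p. c < fst p \<and> fst p < t \<and> c - 2*(t-c) \<le> snd p \<and> snd p \<le> c \<and>
        K * f2 (fst p) / 2 = (1 + sqrt (f2 (fst p) / f2 (snd p)))^2" if t: "c < t" "t < b0" for t
  proof -
    obtain \<xi> where \<xi>: "c < \<xi>" "\<xi> < t" "\<phi> t = f2 \<xi> / 2 * (t - c)^2"
      using taylor[of t] t ac by auto
    have at: "a0 \<le> \<alpha> t" "\<alpha> t < c" "\<phi> (\<alpha> t) = \<phi> t" using \<alpha>1[of t] \<alpha>lt[of t] t by auto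
    obtain \<xi>' where \<xi>': "\<alpha> t < \<xi>'" "\<xi>' < c" "\<phi> (\<alpha> t) = f2 \<xi>' / 2 * (\<alpha> t - c)^2"
      using taylor[of "\<alpha> t"] at cb by auto
    define u where "u = t - c"
    define w where "w = c - \<alpha> t"
    have u: "u > 0" and w: "w > 0" using t at by (auto simp: u_def w_def)
    have b1: "m \<le> f2 \<xi>" "f2 \<xi> \<le> 4*m" using f2b[of \<xi>] \<xi> t ac by auto
    have b2: "m \<le> f2 \<xi>'" "f2 \<xi>' \<le> 4*m" using f2b[of \<xi>'] \<xi>' at cb by auto
    have eq: "f2 \<xi>' * w^2 = f2 \<xi> * u^2"
      using \<xi>(3) \<xi>'(3) at(3) by (simp add: u_def w_def power2_commute)
    have "m * w^2 \<le> f2 \<xi>' * w^2" using b2 by (simp add: mult_right_mono)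
    also have "\<dots> = f2 \<xi> * u^2" by (rule eq)
    also have "\<dots> \<le> (4*m) * u^2" using b1 by (simp add: mult_right_mono)
    finally have "w^2 \<le> (2*u)^2" using m by (simp add: power_mult_distrib)
    then have w2: "w \<le> 2*u" by (rule power2_le_imp_le) (use u in auto)
    have ratio: "f2 \<xi> / f2 \<xi>' = (w/u)^2"
      using r1[OF eq] b2 m u by auto
    have sq: "sqrt (f2 \<xi> / f2 \<xi>') = w / u" using ratio u w by simp
    have "K = G t" using Gconst[OF t] by simp
    also have "\<dots> = (u + w)^2 / (f2 \<xi> / 2 * u^2)" unfolding G_def \<xi>(3) by (simp add: u_def w_def)
    finally have "K * f2 \<xi> / 2 = (1 + w/u)^2"
      using r2 u b1 m by auto
    then show ?thesis using \<xi> \<xi>' w2 sq by (intro exI[of _ "(\<xi>, \<xi>')"]) (auto simp: u_def w_def)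
  qed
  define P where "P t = (SOME p. c < fst p \<and> fst p < t \<and> c - 2*(t-c) \<le> snd p \<and> snd p \<le> c \<and>
        K * f2 (fst p) / 2 = (1 + sqrt (f2 (fst p) / f2 (snd p)))^2)" for t
  have ev: "eventually (\<lambda>t. c < fst (P t) \<and> fst (P t) < t \<and> c - 2*(t-c) \<le> snd (P t) \<and> snd (P t) \<le> c \<and>
        K * f2 (fst (P t)) / 2 = (1 + sqrt (f2 (fst (P t)) / f2 (snd (P t))))^2) (at_right c)"
  proof (rule eventually_at_rightI[OF _ cb])
    fix t assume "t \<in> {c<..<b0}"
    then have "c < t" "t < b0" by auto
    from someI_ex[OF pt[OF this]]
    show "c < fst (P t) \<and> fst (P t) < t \<and> c - 2*(t-c) \<le> snd (P t) \<and> snd (P t) \<le> c \<and>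
        K * f2 (fst (P t)) / 2 = (1 + sqrt (f2 (fst (P t)) / f2 (snd (P t))))^2"
      unfolding P_def .
  qed
  have id: "((\<lambda>t. t) \<longlongrightarrow> c) (at_right c)" by (rule tendsto_ident_at)
  have l1: "((\<lambda>t. fst (P t)) \<longlongrightarrow> c) (at_right c)"
  proof (rule real_tendsto_sandwich[where f="\<lambda>_. c" and h="\<lambda>t. t"])
    show "\<forall>\<^sub>F n in at_right c. c \<le> fst (P n)" by (rule eventually_mono[OF ev]) auto
    show "\<forall>\<^sub>F n in at_right c. fst (P n) \<le> n" by (rule eventually_mono[OF ev]) auto
  qed (auto intro: id)
  have l2: "((\<lambda>t. snd (P t)) \<longlongrightarrow> c) (at_right c)"
  proof (rule real_tendsto_sandwich[where f="\<lambda>t. c - 2*(t-c)" and h="\<lambda>_. c"])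
    show "((\<lambda>t. c - 2*(t-c)) \<longlongrightarrow> c) (at_right c)"
      using tendsto_diff[OF tendsto_const tendsto_mult[OF tendsto_const tendsto_diff[OF id tendsto_const]], of c 2 c]
      by simp
    show "\<forall>\<^sub>F n in at_right c. c - 2*(n-c) \<le> snd (P n)" by (rule eventually_mono[OF ev]) auto
    show "\<forall>\<^sub>F n in at_right c. snd (P n) \<le> c" by (rule eventually_mono[OF ev]) auto
  qed auto
  have f2c: "f2 c \<ge> m" using f2b[of c] ac cb by auto
  have L1: "((\<lambda>t. K * f2 (fst (P t)) / 2) \<longlongrightarrow> K * f2 c / 2) (at_right c)"
    by (intro tendsto_divide[OF tendsto_mult[OF tendsto_const isCont_tendsto_compose[OF cf2 l1]] tendsto_const]) simp
  have L2: "((\<lambda>t. (1 + sqrt (f2 (fst (P t)) / f2 (snd (P t))))^2) \<longlongrightarrow> (1 + sqrt (f2 c / f2 c))^2) (at_right c)"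
    using f2c m by (intro tendsto_power tendsto_add[OF tendsto_const] tendsto_real_sqrt tendsto_divide isCont_tendsto_compose[OF cf2 l1] isCont_tendsto_compose[OF cf2 l2]) auto
  have L1': "((\<lambda>t. (1 + sqrt (f2 (fst (P t)) / f2 (snd (P t))))^2) \<longlongrightarrow> K * f2 c / 2) (at_right c)"
    by (rule Lim_transform_eventually[OF L1], rule eventually_mono[OF ev]) auto
  have "K * f2 c / 2 = (1 + sqrt (f2 c / f2 c))^2"
    by (rule tendsto_unique[OF _ L1' L2]) simp
  then have "K * f2 c = 8" using f2c m by simp
  then have "(b0 - a0)^2 * f2 c = 8 * \<phi> a0" using \<phi>a0 unfolding K_def by (simp add: field_simps)
  then show ?thesis by (simp add: \<phi>_def algebra_simps)
qed



lemma conn_band: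
  fixes f :: "real \<Rightarrow> real"
  assumes cf: "continuous_on {a<..<b} f"
  shows "connected {p. a < fst p \<and> fst p < b \<and> f (fst p) + lo < snd p \<and> snd p < f (fst p) + hi}"
proof -
  have eq: "{p. a < fst p \<and> fst p < b \<and> f (fst p) + lo < snd p \<and> snd p < f (fst p) + hi} =
      (\<lambda>q. (fst q, f (fst q) + snd q)) ` ({a<..<b} \<times> {lo<..<hi})"
  proof
    show "{p. a < fst p \<and> fst p < b \<and> f (fst p) + lo < snd p \<and> snd p < f (fst p) + hi}
        \<subseteq> (\<lambda>q. (fst q, f (fst q) + snd q)) ` ({a<..<b} \<times> {lo<..<hi})"
    proof
      fix p :: "real \<times> real" assume "p \<in> {p. a < fst p \<and> fst p < b \<and> f (fst p) + lo < snd p \<and> snd p < f (fst p) + hi}"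
      then show "p \<in> (\<lambda>q. (fst q, f (fst q) + snd q)) ` ({a<..<b} \<times> {lo<..<hi})"
        by (intro image_eqI[of _ _ "(fst p, snd p - f (fst p))"]) auto
    qed
  qed auto
  have "continuous_on ({a<..<b} \<times> {lo<..<hi}) (\<lambda>q. (fst q, f (fst q) + snd q))"
    by (intro continuous_intros continuous_on_compose2[OF cf]) auto
  moreover have "connected ({a<..<b} \<times> {lo<..<hi::real})"
    by (intro convex_connected convex_Times) auto
  ultimately show ?thesis unfolding eq using connected_continuous_image by blast
qed



lemma alg2: fixes fa fb f1c fc Fa Fb a b c :: real
  assumes "fa*b + f1c*(b-a)^2/2 - Fb - (fa*a + f1c*(a-a)^2/2 - Fa) = 4/3*((b-a)*((fa + f1c*(c-a)) - fc)/2)"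
  shows "(b-a)*(fa + (fa + f1c*(b-a)))/2 - (Fb - Fa) = 2/3*((b-a)*(fa + f1c*(c-a) - fc))"
proof -
  have e1: "(b-a)*(fa + (fa + f1c*(b-a)))/2 - (Fb - Fa) = fa*b + f1c*(b-a)^2/2 - Fb - (fa*a + f1c*(a-a)^2/2 - Fa)"
    by (simp add: power2_eq_square field_simps)
  have e2: "4/3*((b-a)*((fa + f1c*(c-a)) - fc)/2) = 2/3*((b-a)*(fa + f1c*(c-a) - fc))" by simp
  show ?thesis using assms unfolding e1 e2 .
qed

theorem lemma7:
  fixes X D :: "(real \<times> real) set" and f f1 f2 f3 :: "real \<Rightarrow> real" and \<delta> :: real
  assumes "strictly_convex_curve X D"
    and "condition_C X D"
    and "\<delta> > 0"
    and "\<forall>t\<in>{-\<delta><..<\<delta>}. (f has_real_derivative f1 t) (at t) \<and>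
            (f1 has_real_derivative f2 t) (at t) \<and> (f2 has_real_derivative f3 t) (at t)"
    and "continuous_on {-\<delta><..<\<delta>} f3"
    and "\<forall>t\<in>{-\<delta><..<\<delta>}. f t \<ge> 0"
    and "strictly_convex_fun_on {-\<delta><..<\<delta>} f"
    and "f 0 = 0" and "f1 0 = 0" and "f2 0 > 0"
    and "(0, 0) \<in> X"
    and "\<exists>r>0. X \<inter> ball (0, 0) r = {(t, f t) | t. t \<in> {-\<delta><..<\<delta>}} \<inter> ball (0, 0) r"
  shows "\<exists>\<epsilon>>0. \<forall>x u. \<bar>x\<bar> < \<epsilon> \<and>
           (if x = 0 then u = 0 else (min 0 x < u \<and> u < max 0 x \<and> x * f1 u = f x)) \<longrightarrow>
           x ^ 3 * f2 u = 8 * (f x * u - x * f u) \<and>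
           x * f x = 4/3 * (f x * u - x * f u) + 2 * (LBINT t=ereal 0..ereal x. f t)"
proof -
  note scc = assms(1) and cC = assms(2) and \<delta> = assms(3) and der = assms(4)
    and sconv = assms(7) and f00 = assms(8) and f20 = assms(10)
  obtain r where r: "r > 0" and rX: "X \<inter> ball (0, 0) r = {(t, f t) | t. t \<in> {-\<delta><..<\<delta>}} \<inter> ball (0, 0) r"
    using assms(12) by blast
  have oD: "open D" and cD: "convex D" and XD: "X = frontier D"
    using scc unfolding strictly_convex_curve_def by auto
  have DX: "p \<notin> D" if "p \<in> X" for p
    using that XD oD by (simp add: frontier_def interior_open)
  have df: "(f has_real_derivative f1 t) (at t)" and df1: "(f1 has_real_derivative f2 t) (at t)"
    and df2: "(f2 has_real_derivative f3 t) (at t)" if "-\<delta> < t" "t < \<delta>" for t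
    using der that by auto
  have cf: "isCont f t" and cf2: "isCont f2 t" if "-\<delta> < t" "t < \<delta>" for t
    using DERIV_isCont df df2 that by blast+
  define \<rho> where "\<rho> = r / 4"
  have \<rho>: "\<rho> > 0" using r by (simp add: \<rho>_def)
  obtain e1 where e1: "e1 > 0" "\<And>t. \<bar>t\<bar> < e1 \<Longrightarrow> \<bar>f t\<bar> < \<rho>/2"
  proof -
    have "f \<midarrow>0\<rightarrow> f 0" using cf[of 0] \<delta> by (simp add: isCont_def)
    from LIM_D[OF this, of "\<rho>/2"] \<rho> obtain s where s: "s > 0" "\<forall>x. x \<noteq> 0 \<and> norm (x - 0) < s \<longrightarrow> norm (f x - f 0) < \<rho>/2"
      by auto
    show ?thesis
    proof (rule that[OF s(1)])
      fix t :: real assume "\<bar>t\<bar> < s"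
      then show "\<bar>f t\<bar> < \<rho>/2" using s(2) f00 \<rho> by (cases "t = 0") auto
    qed
  qed
  obtain e2 where e2: "e2 > 0" "\<And>t. \<bar>t\<bar> < e2 \<Longrightarrow> \<bar>f2 t - f2 0\<bar> < f2 0/2"
  proof -
    have "f2 \<midarrow>0\<rightarrow> f2 0" using cf2[of 0] \<delta> by (simp add: isCont_def)
    from LIM_D[OF this, of "f2 0/2"] f20 obtain s where s: "s > 0" "\<forall>x. x \<noteq> 0 \<and> norm (x - 0) < s \<longrightarrow> norm (f2 x - f2 0) < f2 0/2"
      by auto
    show ?thesis
    proof (rule that[OF s(1)])
      fix t :: real assume "\<bar>t\<bar> < s"
      then show "\<bar>f2 t - f2 0\<bar> < f2 0/2" using s(2) f20 by (cases "t = 0") auto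
    qed
  qed
  define \<epsilon> where "\<epsilon> = min (min (\<delta>/2) (r/2)) (min e1 e2)"
  have \<epsilon>: "\<epsilon> > 0" "\<epsilon> < \<delta>" "\<epsilon> \<le> r/2" "\<epsilon> \<le> e1" "\<epsilon> \<le> e2"
    using \<delta> r e1 e2 by (auto simp: \<epsilon>_def)
  have fsmall: "\<bar>f t\<bar> < \<rho>/2" if "\<bar>t\<bar> < \<epsilon>" for t using e1 that \<epsilon> by auto
  have f2b: "f2 0/2 < f2 t \<and> f2 t < 3/2 * f2 0" if "\<bar>t\<bar> < \<epsilon>" for t
  proof -
    have "\<bar>f2 t - f2 0\<bar> < f2 0/2" using e2(2)[of t] that \<epsilon> by auto
    then show ?thesis unfolding abs_less_iff by linarith
  qed
  have normb: "norm (t, y) < r" if "\<bar>t\<bar> < r/2" "\<bar>y\<bar> < r/2" for t y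
    using norm_Pair_le[of t y] that by auto
  have ballI: "p \<in> ball (0,0) r \<longleftrightarrow> norm p < r" for p :: "real \<times> real"
  proof -
    have "dist (0,0) p = norm p" using dist_0_norm[of p] by (simp add: zero_prod_def)
    then show ?thesis by (simp add: mem_ball)
  qed
  have gX: "(t, f t) \<in> X" if "\<bar>t\<bar> < \<epsilon>" for t
  proof -
    have "\<bar>f t\<bar> < r/2" using fsmall[OF that] r unfolding \<rho>_def by linarith
    moreover have "\<bar>t\<bar> < r/2" using that \<epsilon>(3) by linarith
    ultimately have "norm (t, f t) < r" by (rule normb[rotated])
    then have b: "(t, f t) \<in> ball (0,0) r" by (rule ballI[THEN iffD2])
    have "-\<delta> < t" "t < \<delta>" using that \<epsilon>(2) by linarith+
    then have "(t, f t) \<in> {(t, f t) | t. t \<in> {-\<delta><..<\<delta>}}" by auto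
    with b have "(t, f t) \<in> {(t, f t) | t. t \<in> {-\<delta><..<\<delta>}} \<inter> ball (0, 0) r" by (rule IntI[rotated])
    then have "(t, f t) \<in> X \<inter> ball (0, 0) r" by (simp only: rX)
    then show ?thesis by (rule IntD1)
  qed
  have gG: "\<exists>t. -\<delta> < t \<and> t < \<delta> \<and> p = (t, f t)" if "p \<in> X" "norm p < r" for p
  proof -
    have "p \<in> ball (0,0) r" using that(2) by (rule ballI[THEN iffD2])
    then have "p \<in> {(t, f t) | t. t \<in> {-\<delta><..<\<delta>}}" using rX that(1) by blast
    then obtain t where "t \<in> {-\<delta><..<\<delta>}" "p = (t, f t)" by blast
    then show ?thesis by auto
  qed
  have sc: "\<And>x y s. x \<in> {-\<delta><..<\<delta>} \<Longrightarrow> y \<in> {-\<delta><..<\<delta>} \<Longrightarrow> x \<noteq> y \<Longrightarrow> 0 < s \<Longrightarrow> s < 1 \<Longrightarrow>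
      f ((1-s)*x + s*y) < (1-s)*f x + s*f y"
    using sconv unfolding strictly_convex_fun_on_def by blast
  have contf: "continuous_on {-\<epsilon><..<\<epsilon>} f"
    using cf \<epsilon> by (intro continuous_at_imp_continuous_on) auto
  define U where "U = {p. -\<epsilon> < fst p \<and> fst p < \<epsilon> \<and> f (fst p) + 0 < snd p \<and> snd p < f (fst p) + \<rho>}"
  define Bl where "Bl = {p. -\<epsilon> < fst p \<and> fst p < \<epsilon> \<and> f (fst p) + (-\<rho>) < snd p \<and> snd p < f (fst p) + 0}"
  have connU: "connected U" unfolding U_def by (rule conn_band[OF contf])
  have connB: "connected Bl" unfolding Bl_def by (rule conn_band[OF contf])
  have notX: "p \<notin> X" if "\<bar>fst p\<bar> < \<epsilon>" "\<bar>snd p - f (fst p)\<bar> < \<rho>" "snd p \<noteq> f (fst p)" for p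
  proof
    assume pX: "p \<in> X"
    have "\<bar>fst p\<bar> < r/2" using that(1) \<epsilon>(3) by linarith
    moreover have "\<bar>snd p\<bar> < r/2" using that(2) fsmall[OF that(1)] unfolding \<rho>_def by linarith
    ultimately have "norm (fst p, snd p) < r" by (rule normb)
    then have "norm p < r" by simp
    from gG[OF pX this] obtain t where "p = (t, f t)" by blast
    then show False using that(3) by simp
  qed
  have dichot: "S \<inter> D = {} \<or> S \<subseteq> D" if "connected S" "S \<inter> X = {}" for S
    using connected_Int_frontier[OF that(1), of D] that(2) XD by blast
  have UD0: "U \<inter> D = {} \<or> U \<subseteq> D"
  proof (rule dichot[OF connU])
    show "U \<inter> X = {}"
    proof (rule equals0I)
      fix p assume "p \<in> U \<inter> X"
      then have "p \<in> X" "\<bar>fst p\<bar> < \<epsilon>" "\<bar>snd p - f (fst p)\<bar> < \<rho>" "snd p \<noteq> f (fst p)"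
        unfolding U_def by auto
      then show False using notX by blast
    qed
  qed
  have BD0: "Bl \<inter> D = {} \<or> Bl \<subseteq> D"
  proof (rule dichot[OF connB])
    show "Bl \<inter> X = {}"
    proof (rule equals0I)
      fix p assume "p \<in> Bl \<inter> X"
      then have "p \<in> X" "\<bar>fst p\<bar> < \<epsilon>" "\<bar>snd p - f (fst p)\<bar> < \<rho>" "snd p \<noteq> f (fst p)"
        unfolding Bl_def by auto
      then show False using notX by blast
    qed
  qed
  have "U \<inter> D \<noteq> {}"
  proof -
    have "(0,0) \<in> closure D" using assms(11) XD by (simp add: frontier_def)
    moreover have "min \<epsilon> (\<rho>/2) > 0" using \<epsilon> \<rho> by simp
    ultimately obtain p where pD: "p \<in> D" and pd: "dist p (0,0) < min \<epsilon> (\<rho>/2)"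
      using closure_approachable by blast
    have np: "norm p < min \<epsilon> (\<rho>/2)" using pd by (simp add: dist_norm zero_prod_def[symmetric])
    have p1: "\<bar>fst p\<bar> < \<epsilon>" using norm_fst_le[of "fst p" "snd p"] np by simp
    have p2: "\<bar>snd p\<bar> < \<rho>/2" using norm_snd_le[of "snd p" "fst p"] np by simp
    have p3: "snd p \<noteq> f (fst p)"
    proof
      assume "snd p = f (fst p)"
      then have "p = (fst p, f (fst p))" by (simp add: prod_eq_iff)
      then have "p \<in> X" using gX[OF p1] by simp
      then show False using DX pD by blast
    qed
    have p4: "\<bar>snd p - f (fst p)\<bar> < \<rho>" using p2 fsmall[OF p1] by linarith
    show ?thesis
    proof (cases "f (fst p) < snd p")
      case True
      then have "p \<in> U" unfolding U_def using p1 p4 by (auto simp: abs_less_iff)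
      then show ?thesis using pD by blast
    next
      case False
      then have "p \<in> Bl" unfolding Bl_def using p1 p3 p4 by (auto simp: abs_less_iff)
      then have BD: "Bl \<subseteq> D" using BD0 pD by blast
      define t0 where "t0 = \<epsilon>/2"
      have t0: "\<bar>t0\<bar> < \<epsilon>" "\<bar>-t0\<bar> < \<epsilon>" "t0 > 0" using \<epsilon> by (auto simp: t0_def)
      define avg where "avg = (f (-t0) + f t0)/2"
      have "f ((1 - 1/2) * (-t0) + 1/2 * t0) < (1 - 1/2) * f (-t0) + 1/2 * f t0"
        by (rule sc) (use t0 \<epsilon>(2) in auto)
      then have avgp: "avg > 0" using f00 by (simp add: avg_def)
      have a1: "f t0 < \<rho>/2" using fsmall[OF t0(1)] by (simp add: abs_less_iff)
      have a2: "f (-t0) < \<rho>/2" using fsmall[OF t0(2)] by (simp add: abs_less_iff)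
      have avgs: "avg < \<rho>/2" unfolding avg_def using a1 a2 by simp
      define q1 where "q1 = (-t0, f (-t0) - avg/2)"
      define q2 where "q2 = (t0, f t0 - avg/2)"
      have "q1 \<in> Bl" "q2 \<in> Bl" using t0 avgp avgs \<rho> by (auto simp: q1_def q2_def Bl_def)
      then have "q1 \<in> D" "q2 \<in> D" using BD by auto
      then have "(1/2) *\<^sub>R q1 + (1/2) *\<^sub>R q2 \<in> D" by (intro convexD[OF cD]) auto
      moreover have "(1/2) *\<^sub>R q1 + (1/2) *\<^sub>R q2 = (0, avg/2)"
        by (simp add: q1_def q2_def avg_def field_simps)
      moreover have "(0, avg/2) \<in> U" using avgp avgs \<epsilon> f00 by (simp add: U_def)
      ultimately show ?thesis by auto
    qed
  qed
  then have UD: "U \<subseteq> D" using UD0 by blast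
  have tang: "tangent_direction X (c, f c) (1, f1 c)" if c: "\<bar>c\<bar> < \<epsilon>" for c
  proof -
    define \<eta> where "\<eta> = \<epsilon> - \<bar>c\<bar>"
    have \<eta>: "\<eta> > 0" using c by (simp add: \<eta>_def)
    have inI: "\<bar>t\<bar> < \<epsilon>" if "t \<in> {c-\<eta><..<c+\<eta>}" for t using that by (auto simp: \<eta>_def)
    have inD: "-\<delta> < t \<and> t < \<delta>" if "t \<in> {c-\<eta><..<c+\<eta>}" for t using inI[OF that] \<epsilon>(2) by linarith
    define g where "g t = (t, f t)" for t
    define g1 where "g1 t = (1::real, f1 t)" for t
    define g2 where "g2 t = (0::real, f2 t)" for t
    define g3 where "g3 t = (0::real, f3 t)" for t
    define T where "T = {p::real\<times>real. c-\<eta> < fst p \<and> fst p < c+\<eta>} \<inter> ball (0,0) r"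
    have oT: "open T" unfolding T_def
      by (intro open_Int open_Collect_conj open_Collect_less continuous_intros) auto
    have img: "g ` {c-\<eta><..<c+\<eta>} = X \<inter> T"
    proof
      show "g ` {c-\<eta><..<c+\<eta>} \<subseteq> X \<inter> T"
      proof
        fix p assume "p \<in> g ` {c-\<eta><..<c+\<eta>}"
        then obtain t where t: "t \<in> {c-\<eta><..<c+\<eta>}" "p = (t, f t)" by (auto simp: g_def)
        have "\<bar>f t\<bar> < r/2" using fsmall[OF inI[OF t(1)]] r unfolding \<rho>_def by linarith
        moreover have "\<bar>t\<bar> < r/2" using inI[OF t(1)] \<epsilon>(3) by linarith
        ultimately have "norm (t, f t) < r" by (rule normb[rotated])
        then have "(t, f t) \<in> ball (0,0) r" by (rule ballI[THEN iffD2])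
        moreover have "(t, f t) \<in> X" by (rule gX[OF inI[OF t(1)]])
        ultimately show "p \<in> X \<inter> T" using t unfolding T_def by auto
      qed
      show "X \<inter> T \<subseteq> g ` {c-\<eta><..<c+\<eta>}"
      proof
        fix p assume p: "p \<in> X \<inter> T"
        then have "norm p < r" unfolding T_def using ballI by blast
        with p gG obtain t where t: "p = (t, f t)" by blast
        then have "t \<in> {c-\<eta><..<c+\<eta>}" using p unfolding T_def by auto
        then show "p \<in> g ` {c-\<eta><..<c+\<eta>}" using t unfolding g_def by blast
      qed
    qed
    have pd: "\<forall>t\<in>{c-\<eta><..<c+\<eta>}. (g has_vector_derivative g1 t) (at t) \<and>
                     (g1 has_vector_derivative g2 t) (at t) \<and>
                     (g2 has_vector_derivative g3 t) (at t) \<and> g1 t \<noteq> 0"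
    proof
      fix t assume t: "t \<in> {c-\<eta><..<c+\<eta>}"
      have d: "(f has_real_derivative f1 t) (at t)" "(f1 has_real_derivative f2 t) (at t)"
        "(f2 has_real_derivative f3 t) (at t)" using df df1 df2 inD[OF t] by auto
      have "((\<lambda>t. (t, f t)) has_vector_derivative (1, f1 t)) (at t)"
        by (intro has_vector_derivative_Pair has_vector_derivative_id)
           (use d(1) in \<open>simp add: has_real_derivative_iff_has_vector_derivative\<close>)
      moreover have "((\<lambda>t. (1::real, f1 t)) has_vector_derivative (0, f2 t)) (at t)"
        by (intro has_vector_derivative_Pair has_vector_derivative_const)
           (use d(2) in \<open>simp add: has_real_derivative_iff_has_vector_derivative\<close>)
      moreover have "((\<lambda>t. (0::real, f2 t)) has_vector_derivative (0, f3 t)) (at t)"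
        by (intro has_vector_derivative_Pair has_vector_derivative_const)
           (use d(3) in \<open>simp add: has_real_derivative_iff_has_vector_derivative\<close>)
      ultimately show "(g has_vector_derivative g1 t) (at t) \<and>
                     (g1 has_vector_derivative g2 t) (at t) \<and>
                     (g2 has_vector_derivative g3 t) (at t) \<and> g1 t \<noteq> 0"
        unfolding g_def[abs_def] g1_def[abs_def] g2_def[abs_def] g3_def[abs_def] by (simp add: zero_prod_def)
    qed
    have pc: "continuous_on {c-\<eta><..<c+\<eta>} g3"
    proof -
      have "continuous_on {c-\<eta><..<c+\<eta>} f3"
        by (rule continuous_on_subset[OF assms(5)]) (use inD in auto)
      then show ?thesis unfolding g3_def[abs_def]
        by (intro continuous_on_Pair continuous_on_const)
    qed
    have p0: "c - \<eta> < c + \<eta>" using \<eta> by simp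
    have pi: "inj_on g {c-\<eta><..<c+\<eta>}" by (rule inj_onI) (simp add: g_def)
    have ps: "g ` {c-\<eta><..<c+\<eta>} \<subseteq> X" using img by blast
    have po: "openin (top_of_set X) (g ` {c-\<eta><..<c+\<eta>})" unfolding openin_open using img oT by blast
    have lp: "local_param X g g1 g2 g3 (c-\<eta>) (c+\<eta>)"
      unfolding local_param_def using p0 pi ps po pd pc by blast
    have "local_param X g g1 g2 g3 (c-\<eta>) (c+\<eta>) \<and> c \<in> {c-\<eta><..<c+\<eta>} \<and> g c = (c, f c) \<and> cross2 (1, f1 c) (g1 c) = 0"
      using lp \<eta> by (simp add: g_def g1_def cross2_def)
    then have "\<exists>g g1 g2 g3 a b t. local_param X g g1 g2 g3 a b \<and> t \<in> {a<..<b} \<and> g t = (c, f c) \<and> cross2 (1, f1 c) (g1 t) = 0"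
      by blast
    moreover have "(1::real, f1 c) \<noteq> 0" by (simp add: zero_prod_def)
    ultimately show ?thesis unfolding tangent_direction_def by blast
  qed
  have contfc: "continuous_on {-\<epsilon>..\<epsilon>} f"
    using cf \<epsilon> by (intro continuous_at_imp_continuous_on) auto
  define F where "F \<tau> = integral {-\<epsilon>..\<tau>} f" for \<tau>
  have dFw: "(F has_vector_derivative f \<tau>) (at \<tau> within {-\<epsilon>..\<epsilon>})" if "\<tau> \<in> {-\<epsilon>..\<epsilon>}" for \<tau>
    unfolding F_def[abs_def] by (rule integral_has_vector_derivative[OF contfc that])
  have dF: "(F has_real_derivative f \<tau>) (at \<tau>)" if "-\<epsilon> < \<tau>" "\<tau> < \<epsilon>" for \<tau>
    using dFw[of \<tau>] that at_within_Icc_at[of "-\<epsilon>" \<tau> \<epsilon>]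
    by (simp add: has_real_derivative_iff_has_vector_derivative)
  define fe where "fe \<tau> = f (max (-\<epsilon>) (min \<epsilon> \<tau>))" for \<tau>
  have contfe: "continuous_on UNIV fe"
    unfolding fe_def[abs_def]
    by (rule continuous_on_compose2[OF contfc]) (use \<epsilon>(1) in \<open>auto intro!: continuous_intros\<close>)
  have fe_eq: "fe \<tau> = f \<tau>" if "\<bar>\<tau>\<bar> < \<epsilon>" for \<tau> using that by (simp add: fe_def)
  have KEY: "(b-a)*(f a + f b)/2 - (F b - F a) = 2/3*((b-a)*(f a + f1 c*(c - a) - f c))"
    if ab: "-\<epsilon> < a" "a < c" "c < b" "b < \<epsilon>" and sl: "f1 c * (b - a) = f b - f a" for a b c
  proof -
    define ln0 where "ln0 \<tau> = f a + f1 c * (\<tau> - a)" for \<tau>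
    have ba: "b - a > 0" using ab by simp
    have fb: "f b = f a + f1 c * (b - a)" using sl by simp
    have aeps: "\<bar>a\<bar> < \<epsilon>" "\<bar>b\<bar> < \<epsilon>" "\<bar>c\<bar> < \<epsilon>" using ab by auto
    have ln0a: "ln0 a = f a" by (simp add: ln0_def)
    have ln0b: "ln0 b = f b" using fb by (simp add: ln0_def)
    have f1c: "f1 c = (f b - f a)/(b-a)" using sl ba by (simp add: field_simps)
    have comb0: "ln0 \<tau> = (1 - s) * f a + s * f b" if "s = (\<tau>-a)/(b-a)" for \<tau> s
    proof -
      have e: "f1 c * (\<tau> - a) = s * (f b - f a)" unfolding f1c that by simp
      show ?thesis unfolding ln0_def e by (simp add: algebra_simps)
    qed
    have comb: "ln0 \<tau> = (1 - (\<tau>-a)/(b-a)) * f a + (\<tau>-a)/(b-a) * f b" for \<tau>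
      by (rule comb0) simp
    have pt: "(1 - (\<tau>-a)/(b-a)) * a + (\<tau>-a)/(b-a) * b = \<tau>" for \<tau>
    proof -
      define s where "s = (\<tau>-a)/(b-a)"
      have e: "s * (b - a) = \<tau> - a" using ba by (simp add: s_def)
      have "(1 - s) * a + s * b = a + s * (b - a)" by (simp add: algebra_simps)
      also have "\<dots> = \<tau>" using e by simp
      finally show ?thesis unfolding s_def .
    qed
    have below: "f \<tau> < ln0 \<tau>" if "a < \<tau>" "\<tau> < b" for \<tau>
    proof -
      have "f ((1 - (\<tau>-a)/(b-a)) * a + (\<tau>-a)/(b-a) * b) < (1 - (\<tau>-a)/(b-a)) * f a + (\<tau>-a)/(b-a) * f b"
        by (rule sc) (use ab that \<epsilon>(2) ba in \<open>auto simp: field_simps\<close>)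
      then show ?thesis unfolding pt comb .
    qed
    have ln0small: "ln0 \<tau> < \<rho>/2" if "a \<le> \<tau>" "\<tau> \<le> b" for \<tau>
    proof -
      have "(1 - (\<tau>-a)/(b-a)) * f a + (\<tau>-a)/(b-a) * f b < \<rho>/2"
      proof (rule convex_bound_lt)
        show "f a < \<rho>/2" "f b < \<rho>/2" using fsmall[OF aeps(1)] fsmall[OF aeps(2)] by (simp_all add: abs_less_iff)
        show "0 \<le> 1 - (\<tau>-a)/(b-a)" "0 \<le> (\<tau>-a)/(b-a)" using that ba by (simp_all add: field_simps)
      qed simp
      then show ?thesis unfolding comb .
    qed
    have pos: "ln0 c - f c > 0" using below[of c] ab by simp
    define A where "A = (a, f a)"
    define B where "B = (b, f b)"
    define P where "P = (c, f c)"
    have crossz: "cross2 (B - A) (z - A) = (b-a) * (snd z - ln0 (fst z))" for z :: "real \<times> real"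
      unfolding cross2_def A_def B_def ln0_def fb by (simp add: algebra_simps)
    have crossP: "cross2 (B - A) (P - A) = (b-a) * (f c - ln0 c)"
      using crossz[of P] by (simp add: P_def)
    have kneg: "(b-a) * (f c - ln0 c) < 0" using ba pos by (simp add: mult_pos_neg)
    define S where "S = {z \<in> D. snd z < ln0 (fst z)}"
    have capS: "cap_region D A B P = S"
    proof -
      have "cross2 (B - A) (z - A) * cross2 (B - A) (P - A) > 0 \<longleftrightarrow> snd z < ln0 (fst z)" for z
      proof -
        have "cross2 (B - A) (z - A) * cross2 (B - A) (P - A) > 0 \<longleftrightarrow> (b-a) * (snd z - ln0 (fst z)) < 0"
        proof -
          have g: "\<And>x K::real. K < 0 \<Longrightarrow> (0 < x * K) = (x < 0)" by (auto simp: zero_less_mult_iff)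
          show ?thesis unfolding crossP crossz[of z] by (rule g[OF kneg])
        qed
        also have "\<dots> \<longleftrightarrow> snd z < ln0 (fst z)" using ba by (simp add: mult_less_0_iff)
        finally show ?thesis .
      qed
      then show ?thesis unfolding cap_region_def S_def by blast
    qed
    define R where "R = {p. a < fst p \<and> fst p < b \<and> fe (fst p) < snd p \<and> snd p < ln0 (fst p)}"
    have contln0: "continuous_on UNIV ln0" unfolding ln0_def[abs_def] by (intro continuous_intros)
    have RU: "R \<subseteq> U"
    proof
      fix p assume p: "p \<in> R"
      then have p1: "a < fst p" "fst p < b" "fe (fst p) < snd p" "snd p < ln0 (fst p)" by (auto simp: R_def)
      have pe: "\<bar>fst p\<bar> < \<epsilon>" using p1 ab by auto
      have "fe (fst p) = f (fst p)" by (rule fe_eq[OF pe])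
      moreover have "ln0 (fst p) < \<rho>/2" using ln0small p1 by auto
      moreover have "- (\<rho>/2) < f (fst p)" using fsmall[OF pe] by (simp add: abs_less_iff)
      ultimately show "p \<in> U" unfolding U_def using p1 pe by (auto simp: abs_less_iff)
    qed
    have RS: "R \<subseteq> S" using RU UD unfolding S_def R_def by blast
    have Rne: "(c, f c + (ln0 c - f c)/2) \<in> R"
      unfolding R_def using ab pos fe_eq[OF aeps(3)] by (simp add: field_simps)
    have oR: "open R" unfolding R_def
      by (intro open_Collect_conj open_Collect_less continuous_intros continuous_on_compose2[OF contfe]
            continuous_on_compose2[OF contln0]) auto
    define C where "C = {p. a \<le> fst p \<and> fst p \<le> b \<and> fe (fst p) \<le> snd p \<and> snd p \<le> ln0 (fst p)}"
    have clC: "closed C" unfolding C_def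
      by (intro closed_Collect_conj closed_Collect_le continuous_intros continuous_on_compose2[OF contfe]
            continuous_on_compose2[OF contln0]) auto
    have clR: "closure R \<subseteq> C"
      by (rule closure_minimal[OF _ clC]) (auto simp: R_def C_def)
    have convS: "convex S"
    proof -
      have "S = D \<inter> {z. inner (- f1 c, 1::real) z < f a - f1 c * a}"
        unfolding S_def ln0_def by (auto simp: algebra_simps)
      then show ?thesis using cD convex_halfspace_lt convex_Int by metis
    qed
    have SR: "S \<subseteq> R"
    proof (rule ccontr)
      assume "\<not> S \<subseteq> R"
      then have "S - R \<noteq> {}" by blast
      moreover have "S \<inter> R \<noteq> {}" using Rne RS by blast
      ultimately have "S \<inter> frontier R \<noteq> {}"
        using connected_Int_frontier[OF convex_connected[OF convS]] by blast
      then obtain z where zS: "z \<in> S" and zF: "z \<in> frontier R" by blast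
      have zC: "z \<in> C" and zR: "z \<notin> R"
        using zF clR interior_open[OF oR] unfolding frontier_def by auto
      have zD: "z \<in> D" and zl: "snd z < ln0 (fst z)" using zS by (auto simp: S_def)
      have z1: "a \<le> fst z" "fst z \<le> b" "fe (fst z) \<le> snd z" using zC by (auto simp: C_def)
      show False
      proof (cases "fst z = a \<or> fst z = b")
        case True
        then show ?thesis
        proof
          assume "fst z = a"
          then show False using z1(3) zl fe_eq[OF aeps(1)] ln0a by simp
        next
          assume "fst z = b"
          then show False using z1(3) zl fe_eq[OF aeps(2)] ln0b by simp
        qed
      next
        case False
        then have zin: "a < fst z" "fst z < b" using z1 by auto
        then have ze: "\<bar>fst z\<bar> < \<epsilon>" using ab by auto
        have "\<not> fe (fst z) < snd z" using zR zin zl by (auto simp: R_def)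
        then have "snd z = f (fst z)" using z1(3) fe_eq[OF ze] by simp
        then have "z = (fst z, f (fst z))" by (simp add: prod_eq_iff)
        then have "z \<in> X" using gX[OF ze] by simp
        then show False using DX zD by blast
      qed
    qed
    have capR: "cap_region D A B P = R" using capS SR RS by blast
    define Lam where "Lam \<tau> = f a * \<tau> + f1 c * (\<tau> - a)^2/2 - F \<tau>" for \<tau>
    have I: "((\<lambda>\<tau>. ln0 \<tau> - fe \<tau>) has_integral (Lam b - Lam a)) {a..b}"
    proof (rule fundamental_theorem_of_calculus)
      show "a \<le> b" using ab by simp
      fix x assume x: "x \<in> {a..b}"
      then have xe: "-\<epsilon> < x" "x < \<epsilon>" using ab by auto
      have "(Lam has_real_derivative (f a + f1 c * (x - a) - f x)) (at x)"
        unfolding Lam_def[abs_def]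
        by (auto intro!: derivative_eq_intros dF[OF xe])
      moreover have "f a + f1 c * (x - a) - f x = ln0 x - fe x" using fe_eq xe by (simp add: ln0_def)
      ultimately show "(Lam has_vector_derivative (ln0 x - fe x)) (at x within {a..b})"
        by (simp add: has_real_derivative_iff_has_vector_derivative has_vector_derivative_at_within)
    qed
    have le: "fe \<tau> \<le> ln0 \<tau>" if "\<tau> \<in> {a..b}" for \<tau>
    proof -
      have te: "\<bar>\<tau>\<bar> < \<epsilon>" using that ab by auto
      show ?thesis
      proof (cases "\<tau> = a \<or> \<tau> = b")
        case True then show ?thesis using fe_eq[OF te] ln0a ln0b by auto
      next
        case False then show ?thesis using below[of \<tau>] that fe_eq[OF te] by auto
      qed
    qed
    have mR: "measure lebesgue R = Lam b - Lam a"
      unfolding R_def by (rule measure_between[OF _ contfe contln0 le I]) (use ab in simp)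
    have "measure lebesgue (cap_region D A B P) = 4/3 * triangle_area A B P"
    proof -
      have "P \<in> X \<and> A \<in> X \<and> B \<in> X \<and> A \<noteq> B \<and> tangent_direction X P (1, f1 c) \<and> cross2 (B - A) (1, f1 c) = 0"
        using gX[OF aeps(1)] gX[OF aeps(2)] gX[OF aeps(3)] tang[OF aeps(3)] ab sl
        by (auto simp: A_def B_def P_def cross2_def algebra_simps)
      then show ?thesis using cC unfolding condition_C_def by blast
    qed
    moreover have "triangle_area A B P = (b-a) * (ln0 c - f c) / 2"
      unfolding triangle_area_def crossP using kneg by (simp add: abs_of_neg algebra_simps)
    ultimately have "Lam b - Lam a = 4/3 * ((b-a) * (ln0 c - f c) / 2)" using capR mR by simp
    then have "f a*b + f1 c*(b-a)^2/2 - F b - (f a*a + f1 c*(a-a)^2/2 - F a) = 4/3*((b-a)*((f a + f1 c*(c-a)) - f c)/2)"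
      by (simp only: Lam_def ln0_def)
    then show ?thesis unfolding fb by (rule alg2)
  qed
  show ?thesis
  proof (rule exI[of _ \<epsilon>], rule conjI[OF \<epsilon>(1)], intro allI impI)
    fix x u
    assume H: "\<bar>x\<bar> < \<epsilon> \<and> (if x = 0 then u = 0 else (min 0 x < u \<and> u < max 0 x \<and> x * f1 u = f x))"
    have xe: "\<bar>x\<bar> < \<epsilon>" using H by blast
    have LB: "(LBINT t=ereal 0..ereal x. f t) = F x - F 0"
    proof (rule interval_integral_FTC_finite)
      show "continuous_on {min 0 x..max 0 x} f"
        by (rule continuous_on_subset[OF contfc]) (use xe in auto)
      fix y assume y: "min 0 x \<le> y" "y \<le> max 0 x"
      then have "y \<in> {-\<epsilon>..\<epsilon>}" using xe by auto
      from dFw[OF this] show "(F has_vector_derivative f y) (at y within {min 0 x..max 0 x})"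
        by (rule has_vector_derivative_within_subset) (use xe in auto)
    qed
    show "x ^ 3 * f2 u = 8 * (f x * u - x * f u) \<and>
          x * f x = 4/3 * (f x * u - x * f u) + 2 * (LBINT t=ereal 0..ereal x. f t)"
    proof (cases "x = 0")
      case True
      then have "u = 0" using H by simp
      then show ?thesis using True f00 by simp
    next
      case False
      then have u: "min 0 x < u" "u < max 0 x" and hx: "x * f1 u = f x" using H by auto
      define a0 where "a0 = min 0 x"
      define b0 where "b0 = max 0 x"
      have a0e: "-\<epsilon> < a0" and b0e: "b0 < \<epsilon>" using xe \<epsilon>(1) by (auto simp: a0_def b0_def)
      have ue: "\<bar>u\<bar> < \<epsilon>" using u a0e b0e by (auto simp: a0_def b0_def)
      have sl: "f1 u * (b0 - a0) = f b0 - f a0"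
        using hx f00 by (cases "x > 0") (auto simp: a0_def b0_def algebra_simps)
      have R1: "(b0-a0)*(f a0 + f b0)/2 - (F b0 - F a0) = 2/3*((b0-a0)*(f a0 + f1 u*(u - a0) - f u))"
        by (rule KEY[OF a0e _ _ b0e sl]) (use u in \<open>auto simp: a0_def b0_def\<close>)
      have R2: "(b0-a0)^2 * f2 u = 8*(f a0 + f1 u*(u-a0) - f u)"
      proof (rule chord_family[where F=F and m="f2 0/2"])
        show "a0 < u" "u < b0" using u by (auto simp: a0_def b0_def)
        show "(F has_real_derivative f t) (at t)" if "a0 \<le> t" "t \<le> b0" for t
          using dF that a0e b0e by auto
        show "(f has_real_derivative f1 t) (at t)" if "a0 \<le> t" "t \<le> b0" for t
          using df that a0e b0e \<epsilon>(2) by auto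
        show "(f1 has_real_derivative f2 t) (at t)" if "a0 \<le> t" "t \<le> b0" for t
          using df1 that a0e b0e \<epsilon>(2) by auto
        show "f2 0/2 > 0" using f20 by simp
        show "f2 0/2 \<le> f2 t \<and> f2 t \<le> 4*(f2 0/2)" if "a0 \<le> t" "t \<le> b0" for t
        proof -
          have "\<bar>t\<bar> < \<epsilon>" using that a0e b0e by auto
          then show ?thesis using f2b[of t] f20 by auto
        qed
        show "isCont f2 u" using cf2 ue \<epsilon>(2) by auto
        show "f1 u * (b0 - a0) = f b0 - f a0" by (rule sl)
        show "(b-a)*(f a + f b)/2 - (F b - F a) = 2/3*((b-a)*(f a + f1 u*(u - a) - f u))"
          if "a0 \<le> a" "a < u" "u < b" "b \<le> b0" "f1 u * (b - a) = f b - f a" for a b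
          by (rule KEY) (use that a0e b0e in auto)
      qed
      have fx: "f x = x * f1 u" using hx by simp
      show ?thesis
      proof (cases "x > 0")
        case True
        then have a0: "a0 = 0" and b0: "b0 = x" by (auto simp: a0_def b0_def)
        have e1: "x^2 * f2 u = 8*(f1 u * u - f u)" using R2 f00 unfolding a0 b0 by simp
        have e2: "x * (f x)/2 - (F x - F 0) = 2/3*(x*(f1 u * u - f u))" using R1 f00 unfolding a0 b0 by simp
        have "x ^ 3 * f2 u = x * (x^2 * f2 u)" by (simp add: power2_eq_square power3_eq_cube)
        also have "\<dots> = 8 * (f x * u - x * f u)" unfolding e1 fx by (simp add: algebra_simps)
        finally have c1: "x ^ 3 * f2 u = 8 * (f x * u - x * f u)" .
        have "x * f x = 4/3 * (f x * u - x * f u) + 2 * (F x - F 0)"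
          using e2 unfolding fx by (simp add: field_simps)
        then show ?thesis using c1 LB by simp
      next
        case False
        then have xn: "x < 0" using \<open>x \<noteq> 0\<close> by simp
        then have a0: "a0 = x" and b0: "b0 = 0" by (auto simp: a0_def b0_def)
        have e1: "x^2 * f2 u = 8*(f x + f1 u*(u - x) - f u)" using R2 f00 unfolding a0 b0 by simp
        have e2: "(- x) * (f x)/2 - (F 0 - F x) = 2/3*((-x)*(f x + f1 u * (u - x) - f u))"
          using R1 f00 unfolding a0 b0 by simp
        have "x ^ 3 * f2 u = x * (x^2 * f2 u)" by (simp add: power2_eq_square power3_eq_cube)
        also have "\<dots> = 8 * (f x * u - x * f u)" unfolding e1 fx by (simp add: algebra_simps)
        finally have c1: "x ^ 3 * f2 u = 8 * (f x * u - x * f u)" .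
        have "x * f x = 4/3 * (f x * u - x * f u) + 2 * (F x - F 0)"
          using e2 unfolding fx by (simp add: field_simps)
        then show ?thesis using c1 LB by simp
      qed
    qed
  qed
qed


end
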